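(* For all $N\ge2$ and $2\le k\le N$, $$E\big[X_{k,N}^2(W_k-V_{k,N})^2\big]\le r\Big(\frac1{N^2}+\frac{2}{N^{1+r}k^{1-r}}\Big).$$
   Context: Fix $r\in(0,1)$. Multitype Yule process: at time $0$ a single individual of type $1$ is born; no deaths; each individual independently gives birth at rate $1$; a newborn has, independently, its parent's type with probability $1-r$ and otherwise a brand-new type. Individuals are numbered in order of birth (the initial one is the 1st); if the $k$-th individual born has a type different from its parent, that type is called type $k$. $T_N$ is the time the population reaches size $N$; $X_{k,N}$ is the fraction of individuals at time $T_N$ with type in $\{1,\dots,k\}$; $V_{k,N}$ is the fraction, among individuals at time $T_N$ with type in $\{1,\dots,k\}$, of those that have type $k$. $W_k=\lim_{N\to\infty}V_{k,N}$ (exists a.s.); the $W_k$ are independent, $W_1=1$, and for $k\ge2$, $P(W_k>0)=r$ and given $W_k>0$, $W_k\sim\mathrm{Beta}(1,k-1)$. *)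

theory Defs
  imports "HOL-Probability.Probability"
begin

text \<open>Embedded jump chain of the multitype Yule process.
  Individuals are numbered 1, 2, 3, ... in order of birth.  For n \<ge> 2,
  par n is the parent of individual n (an element of {1..n-1}) and
  mut n says whether individual n received a brand-new type.
  ytype par mut n is the type of individual n.\<close>

function ytype :: "(nat \<Rightarrow> nat) \<Rightarrow> (nat \<Rightarrow> bool) \<Rightarrow> nat \<Rightarrow> nat" where
  "ytype par mut n =
     (if n \<le> 1 then 1
      else if mut n then n
      else if 1 \<le> par n \<and> par n < n then ytype par mut (par n)
      else 1)"
  by pat_completeness auto
termination
  by (relation "Wellfounded.measure (\<lambda>(_, _, n). n)") auto

declare ytype.simps [simp del]

text \<open>X_{k,N}: fraction of the N individuals present at time T_N having type in {1..k}.\<close>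
definition Xfrac :: "(nat \<Rightarrow> nat) \<Rightarrow> (nat \<Rightarrow> bool) \<Rightarrow> nat \<Rightarrow> nat \<Rightarrow> real" where
  "Xfrac par mut k N =
     real (card {i \<in> {1..N}. ytype par mut i \<in> {1..k}}) / real N"

text \<open>V_{k,N}: among individuals at time T_N with type in {1..k}, fraction of type k.\<close>
definition Vfrac :: "(nat \<Rightarrow> nat) \<Rightarrow> (nat \<Rightarrow> bool) \<Rightarrow> nat \<Rightarrow> nat \<Rightarrow> real" where
  "Vfrac par mut k N =
     real (card {i \<in> {1..N}. ytype par mut i = k}) /
     real (card {i \<in> {1..N}. ytype par mut i \<in> {1..k}})"

definition Wlim :: "(nat \<Rightarrow> nat) \<Rightarrow> (nat \<Rightarrow> bool) \<Rightarrow> nat \<Rightarrow> real" where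
  "Wlim par mut k = lim (\<lambda>N. Vfrac par mut k N)"

end

theory Submission
  imports Defs "HOL-Real_Asymp.Real_Asymp"
begin

lemma ytype_ge1: "ytype par mut i \<ge> 1"
proof (induction i rule: less_induct)
  case (less i)
  show ?case using less by (subst ytype.simps) auto
qed

lemma ytype_le: "1 \<le> i \<Longrightarrow> ytype par mut i \<le> i"
proof (induction i rule: less_induct)
  case (less i)
  show ?case
  proof (cases "i \<le> 1")
    case True then show ?thesis using less.prems by (subst ytype.simps) auto
  next
    case False
    then show ?thesis using less.IH[of "par i"] by (subst ytype.simps) auto
  qed
qed

lemma ytype_local:
  "(\<And>n. 2 \<le> n \<Longrightarrow> n \<le> i \<Longrightarrow> par n = par' n \<and> mut n = mut' n)
   \<Longrightarrow> ytype par mut i = ytype par' mut' i"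
proof (induction i rule: less_induct)
  case (less i)
  show ?case
  proof (cases "i \<le> 1")
    case True then show ?thesis by (simp add: ytype.simps[of par _ i] ytype.simps[of par' _ i])
  next
    case False
    then have e: "par i = par' i" "mut i = mut' i" using less.prems[of i] by auto
    have r: "ytype par mut (par i) = ytype par' mut' (par i)" if pi: "par i < i"
    proof (rule less.IH[OF pi])
      fix n assume "2 \<le> n" "n \<le> par i"
      then show "par n = par' n \<and> mut n = mut' n" using less.prems[of n] pi by simp
    qed
    show ?thesis using False r by (simp add: e[symmetric] ytype.simps[of par _ i] ytype.simps[of par' _ i])
  qed
qed

lemma ytype_1: "ytype par mut (Suc 0) = 1"
  by (subst ytype.simps) simp

definition cA :: "nat \<Rightarrow> (nat \<Rightarrow> nat) \<Rightarrow> (nat \<Rightarrow> bool) \<Rightarrow> nat \<Rightarrow> nat" where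
  "cA k par mut n = card {i \<in> {1..n}. ytype par mut i \<in> {1..k}}"
definition cB :: "nat \<Rightarrow> (nat \<Rightarrow> nat) \<Rightarrow> (nat \<Rightarrow> bool) \<Rightarrow> nat \<Rightarrow> nat" where
  "cB k par mut n = card {i \<in> {1..n}. ytype par mut i = k}"

lemma Xfrac_cA: "Xfrac par mut k N = real (cA k par mut N) / real N"
  by (simp add: Xfrac_def cA_def)
lemma Vfrac_cA: "Vfrac par mut k N = real (cB k par mut N) / real (cA k par mut N)"
  by (simp add: Vfrac_def cA_def cB_def)

lemma cA_local:
  assumes "\<And>n. 2 \<le> n \<Longrightarrow> n \<le> N \<Longrightarrow> par n = par' n \<and> mut n = mut' n"
  shows "cA k par mut N = cA k par' mut' N" "cB k par mut N = cB k par' mut' N"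
proof -
  have eqt: "ytype par mut i = ytype par' mut' i" if "i \<in> {1..N}" for i
    by (rule ytype_local) (use assms that in auto)
  have *: "{i \<in> {1..N}. P (ytype par mut i)} = {i \<in> {1..N}. P (ytype par' mut' i)}" for P
    using eqt by auto
  show "cA k par mut N = cA k par' mut' N"
    unfolding cA_def using *[of "\<lambda>t. t \<in> {1..k}"] by simp
  show "cB k par mut N = cB k par' mut' N"
    unfolding cB_def using *[of "\<lambda>t. t = k"] by simp
qed

lemma cB_le_cA: "1 \<le> k \<Longrightarrow> cB k par mut N \<le> cA k par mut N"
  unfolding cA_def cB_def by (rule card_mono) auto

lemma cA_le: "cA k par mut N \<le> N"
  unfolding cA_def by (rule order_trans[OF card_mono[of "{1..N}"]]) auto

lemma cA_ge1: "1 \<le> k \<Longrightarrow> 1 \<le> N \<Longrightarrow> 1 \<le> cA k par mut N"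
proof -
  assume "1 \<le> k" "1 \<le> N"
  then have "1 \<in> {i \<in> {1..N}. ytype par mut i \<in> {1..k}}" by (simp add: ytype_1)
  then have "{i \<in> {1..N}. ytype par mut i \<in> {1..k}} \<noteq> {}" by blast
  then have "0 < card {i \<in> {1..N}. ytype par mut i \<in> {1..k}}"
    by (subst card_gt_0_iff) auto
  then show ?thesis unfolding cA_def by linarith
qed

lemma cA_at_k: "1 \<le> k \<Longrightarrow> cA k par mut k = k"
proof -
  assume "1 \<le> k"
  have "{i \<in> {1..k}. ytype par mut i \<in> {1..k}} = {1..k}"
  proof (intro equalityI subsetI)
    fix i assume "i \<in> {1..k}"
    then show "i \<in> {i \<in> {1..k}. ytype par mut i \<in> {1..k}}"
      using ytype_ge1[of par mut i] ytype_le[of i par mut] by auto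
  qed auto
  then show ?thesis by (simp add: cA_def)
qed

lemma cB_at_k: assumes "2 \<le> k" shows "cB k par mut k = (if mut k then 1 else 0)"
proof -
  have lt: "ytype par mut i \<noteq> k" if "i \<in> {1..<k}" for i
    using ytype_le[of i par mut] that by auto
  have tk: "ytype par mut k = k \<longleftrightarrow> mut k"
  proof -
    have "ytype par mut (par k) < k" if "1 \<le> par k" "par k < k"
      using ytype_le[of "par k" par mut] that by auto
    then show ?thesis using assms by (subst ytype.simps) auto
  qed
  have "{i \<in> {1..k}. ytype par mut i = k} = (if mut k then {k} else {})"
  proof (intro equalityI subsetI)
    fix i assume i: "i \<in> {i \<in> {1..k}. ytype par mut i = k}"
    show "i \<in> (if mut k then {k} else {})"
    proof (cases "i = k")
      case True then show ?thesis using i tk by auto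
    next
      case False then show ?thesis using i lt[of i] by auto
    qed
  next
    fix i assume "i \<in> (if mut k then {k} else {})"
    then show "i \<in> {i \<in> {1..k}. ytype par mut i = k}" using tk assms by (auto split: if_splits)
  qed
  then show ?thesis by (simp add: cB_def)
qed

definition hp :: "(nat \<times> bool) list \<Rightarrow> nat \<Rightarrow> nat" where "hp h n = fst (h ! (n - 2))"
definition hm :: "(nat \<times> bool) list \<Rightarrow> nat \<Rightarrow> bool" where "hm h n = snd (h ! (n - 2))"

lemma hp_append: "2 \<le> n \<Longrightarrow> n \<le> length h + 1 \<Longrightarrow> hp (h @ xs) n = hp h n \<and> hm (h @ xs) n = hm h n"
proof -
  assume "2 \<le> n" "n \<le> length h + 1"
  then have "n - 2 < length h" by linarith
  then show ?thesis by (simp add: hp_def hm_def nth_append)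
qed


definition ws :: "real \<Rightarrow> nat \<Rightarrow> nat \<times> bool \<Rightarrow> real" where
  "ws r n x = (if fst x \<in> {1..n-1} then 1 / real (n - 1) else 0) * (if snd x then r else 1 - r)"

definition w :: "real \<Rightarrow> (nat \<times> bool) list \<Rightarrow> real" where
  "w r h = (\<Prod>i<length h. ws r (i + 2) (h ! i))"

fun Hs :: "nat \<Rightarrow> (nat \<times> bool) list set" where
  "Hs 0 = {[]}"
| "Hs (Suc j) = (\<lambda>(h, x). h @ [x]) ` (Hs j \<times> ({1..j+1} \<times> UNIV))"

definition Exh :: "real \<Rightarrow> nat \<Rightarrow> ((nat \<times> bool) list \<Rightarrow> real) \<Rightarrow> real" where
  "Exh r j G = (\<Sum>h\<in>Hs j. w r h * G h)"

lemma finite_Hs: "finite (Hs j)"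
  by (induction j) auto

lemma length_Hs: "h \<in> Hs j \<Longrightarrow> length h = j"
  by (induction j arbitrary: h) auto

lemma w_snoc: "w r (h @ [x]) = w r h * ws r (length h + 2) x"
  unfolding w_def by (simp add: nth_append)

lemma w_nonneg: "0 \<le> r \<Longrightarrow> r \<le> 1 \<Longrightarrow> 0 \<le> w r h"
  unfolding w_def ws_def by (intro prod_nonneg) auto

lemma sum_prod_bool: "finite A \<Longrightarrow> (\<Sum>x\<in>A \<times> (UNIV::bool set). f x) = (\<Sum>p\<in>A. f (p, True) + f (p, False))"
proof -
  assume "finite A"
  have "(\<Sum>p\<in>A. \<Sum>b\<in>(UNIV::bool set). f (p, b)) = (\<Sum>(p, b)\<in>A \<times> UNIV. f (p, b))"
    by (rule sum.cartesian_product)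
  then show ?thesis by (simp add: UNIV_bool add.commute)
qed

lemma Ex_Suc: "Exh r (Suc j) G = Exh r j (\<lambda>h. \<Sum>x\<in>{1..j+1} \<times> UNIV. ws r (j + 2) x * G (h @ [x]))"
proof -
  have inj: "inj_on (\<lambda>(h, x). h @ [x]) (Hs j \<times> ({1..j+1} \<times> (UNIV::bool set)))"
    by (rule inj_onI) auto
  have "Exh r (Suc j) G = (\<Sum>(h, x)\<in>Hs j \<times> ({1..j+1} \<times> UNIV). w r (h @ [x]) * G (h @ [x]))"
    unfolding Exh_def Hs.simps(2) by (subst sum.reindex[OF inj]) (auto intro!: sum.cong)
  also have "\<dots> = (\<Sum>h\<in>Hs j. \<Sum>x\<in>{1..j+1} \<times> UNIV. w r (h @ [x]) * G (h @ [x]))"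
    by (rule sum.cartesian_product[symmetric])
  also have "\<dots> = (\<Sum>h\<in>Hs j. w r h * (\<Sum>x\<in>{1..j+1} \<times> UNIV. ws r (j + 2) x * G (h @ [x])))"
    by (intro sum.cong refl) (simp add: w_snoc length_Hs sum_distrib_left mult.assoc)
  finally show ?thesis unfolding Exh_def .
qed

lemma sum_ws: "(\<Sum>x\<in>{1..j+1} \<times> UNIV. ws r (j + 2) x * g x)
   = (\<Sum>p=1..j+1. r * g (p, True) + (1 - r) * g (p, False)) / real (j + 1)"
proof -
  have "(\<Sum>x\<in>{1..j+1} \<times> UNIV. ws r (j + 2) x * g x)
     = (\<Sum>p=1..j+1. (r * g (p, True) + (1 - r) * g (p, False)) / real (j + 1))"
    by (subst sum_prod_bool) (auto simp: ws_def add_divide_distrib intro!: sum.cong)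
  also have "\<dots> = (\<Sum>p=1..j+1. r * g (p, True) + (1 - r) * g (p, False)) / real (j + 1)"
    by (simp only: sum_divide_distrib)
  finally show ?thesis .
qed

lemma Ex_const: "Exh r j (\<lambda>_. c) = c"
proof (induction j)
  case 0 then show ?case by (simp add: Exh_def w_def)
next
  case (Suc j)
  have e: "r * c + (1 - r) * c = c" by (simp add: algebra_simps)
  have "(\<Sum>x\<in>{1..j+1} \<times> UNIV. ws r (j + 2) x * c) = c"
    by (simp only: sum_ws e) simp
  then show ?case by (simp add: Ex_Suc Suc)
qed

lemma Ex_mono: "0 \<le> r \<Longrightarrow> r \<le> 1 \<Longrightarrow> (\<And>h. h \<in> Hs j \<Longrightarrow> G h \<le> G' h) \<Longrightarrow> Exh r j G \<le> Exh r j G'"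
  unfolding Exh_def by (intro sum_mono mult_left_mono) (auto simp: w_nonneg)

lemma Ex_cong: "(\<And>h. h \<in> Hs j \<Longrightarrow> G h = G' h) \<Longrightarrow> Exh r j G = Exh r j G'"
  unfolding Exh_def by (intro sum.cong) auto

lemma Ex_Suc_local:
  assumes "\<And>h x. h \<in> Hs j \<Longrightarrow> G (h @ [x]) = G h"
  shows "Exh r (Suc j) G = Exh r j G"
proof -
  have "Exh r (Suc j) G = Exh r j (\<lambda>h. (\<Sum>x\<in>{1..j+1} \<times> UNIV. ws r (j + 2) x) * G h)"
    unfolding Ex_Suc by (intro Ex_cong) (simp add: assms sum_distrib_right)
  also have "\<dots> = Exh r j G"
    using sum_ws[where g="\<lambda>_. 1"] by simp
  finally show ?thesis .
qed

lemma sum_if_card: "finite S \<Longrightarrow> (\<Sum>p\<in>S. if P p then c else 0) = real (card {p\<in>S. P p}) * (c::real)"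
  by (simp add: sum.inter_filter[symmetric])


definition tyh :: "(nat \<times> bool) list \<Rightarrow> nat \<Rightarrow> nat" where
  "tyh h i = ytype (hp h) (hm h) i"

lemma ty_snoc_old:
  assumes "i \<le> length h + 1"
  shows "ytype (hp (h @ [x])) (hm (h @ [x])) i = tyh h i"
  unfolding tyh_def by (rule ytype_local) (use hp_append assms in auto)

lemma ty_snoc_new:
  assumes "length h = j" "fst x \<in> {1..j+1}"
  shows "ytype (hp (h @ [x])) (hm (h @ [x])) (j + 2) = (if snd x then j + 2 else tyh h (fst x))"
proof -
  have hp2: "hp (h @ [x]) (j + 2) = fst x" "hm (h @ [x]) (j + 2) = snd x"
    using assms(1) by (simp_all add: hp_def hm_def nth_append)
  have "ytype (hp (h @ [x])) (hm (h @ [x])) (j + 2) =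
     (if snd x then j + 2 else if 1 \<le> fst x \<and> fst x < j + 2 then ytype (hp (h @ [x])) (hm (h @ [x])) (fst x) else 1)"
    by (subst ytype.simps) (simp only: hp2, simp)
  also have "\<dots> = (if snd x then j + 2 else tyh h (fst x))"
    using assms ty_snoc_old[of "fst x" h x] by auto
  finally show ?thesis .
qed

lemma card_snoc:
  assumes "length h = j" "fst x \<in> {1..j+1}"
  shows "card {i \<in> {1..j+2}. P (ytype (hp (h @ [x])) (hm (h @ [x])) i)}
       = card {i \<in> {1..j+1}. P (tyh h i)} + (if P (if snd x then j + 2 else tyh h (fst x)) then 1 else 0)"
proof -
  let ?t = "ytype (hp (h @ [x])) (hm (h @ [x]))"
  have S: "{i \<in> {1..j+1}. P (?t i)} = {i \<in> {1..j+1}. P (tyh h i)}"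
    using ty_snoc_old[of _ h x] assms(1) by auto
  have U: "{i \<in> {1..j+2}. P (?t i)} = {i \<in> {1..j+1}. P (?t i)} \<union> (if P (?t (j+2)) then {j+2} else {})"
    by (auto simp: le_Suc_eq)
  have "card {i \<in> {1..j+2}. P (?t i)} = card {i \<in> {1..j+1}. P (?t i)} + (if P (?t (j+2)) then 1 else 0)"
    unfolding U by (subst card_Un_disjoint) auto
  then show ?thesis using S ty_snoc_new[OF assms] by simp
qed

lemma cA_snoc:
  assumes "length h = j" "fst x \<in> {1..j+1}" "k \<le> j + 1"
  shows "cA k (hp (h @ [x])) (hm (h @ [x])) (j + 2) =
         cA k (hp h) (hm h) (j + 1) + (if \<not> snd x \<and> tyh h (fst x) \<in> {1..k} then 1 else 0)"
  unfolding cA_def using card_snoc[OF assms(1,2), of "\<lambda>t. t \<in> {1..k}"] assms(3)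
  by (simp add: tyh_def)

lemma cB_snoc:
  assumes "length h = j" "fst x \<in> {1..j+1}" "k \<le> j + 1"
  shows "cB k (hp (h @ [x])) (hm (h @ [x])) (j + 2) =
         cB k (hp h) (hm h) (j + 1) + (if \<not> snd x \<and> tyh h (fst x) = k then 1 else 0)"
  unfolding cB_def using card_snoc[OF assms(1,2), of "\<lambda>t. t = k"] assms(3)
  by (simp add: tyh_def)

lemma one_step:
  fixes F :: "nat \<Rightarrow> nat \<Rightarrow> real"
  assumes "length h = j" "1 \<le> k" "k \<le> j + 1"
  defines "a \<equiv> cA k (hp h) (hm h) (j + 1)" and "b \<equiv> cB k (hp h) (hm h) (j + 1)"
  shows "(\<Sum>x\<in>{1..j+1} \<times> UNIV. ws r (j + 2) x *
            F (cA k (hp (h @ [x])) (hm (h @ [x])) (j + 2)) (cB k (hp (h @ [x])) (hm (h @ [x])) (j + 2)))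
       = F a b + (1 - r) / real (j + 1) * (real a * (F (a+1) b - F a b) + real b * (F (a+1) (b+1) - F (a+1) b))"
proof -
  let ?G = "\<lambda>x. F (cA k (hp (h @ [x])) (hm (h @ [x])) (j + 2)) (cB k (hp (h @ [x])) (hm (h @ [x])) (j + 2))"
  let ?IA = "\<lambda>p. if tyh h p \<in> {1..k} then F (a+1) b - F a b else 0"
  let ?IB = "\<lambda>p. if tyh h p = k then F (a+1) (b+1) - F (a+1) b else 0"
  have T: "?G (p, True) = F a b" if "p \<in> {1..j+1}" for p
    using cA_snoc[OF assms(1), of "(p, True)"] cB_snoc[OF assms(1), of "(p, True)"] that assms(3)
    by (simp add: a_def b_def)
  have Fa: "?G (p, False) = F a b + ?IA p + ?IB p" if "p \<in> {1..j+1}" for p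
    using cA_snoc[OF assms(1), of "(p, False)"] cB_snoc[OF assms(1), of "(p, False)"] that assms(2,3)
    by (auto simp: a_def b_def)
  have sA: "(\<Sum>p=1..j+1. ?IA p) = real a * (F (a+1) b - F a b)"
    by (subst sum_if_card) (simp_all add: a_def cA_def tyh_def)
  have sB: "(\<Sum>p=1..j+1. ?IB p) = real b * (F (a+1) (b+1) - F (a+1) b)"
    by (subst sum_if_card) (simp_all add: b_def cB_def tyh_def)
  have "(\<Sum>x\<in>{1..j+1} \<times> UNIV. ws r (j + 2) x * ?G x)
      = (\<Sum>p=1..j+1. r * ?G (p, True) + (1 - r) * ?G (p, False)) / real (j + 1)"
    by (rule sum_ws)
  also have "(\<Sum>p=1..j+1. r * ?G (p, True) + (1 - r) * ?G (p, False))
      = (\<Sum>p=1..j+1. F a b + (1 - r) * ?IA p + (1 - r) * ?IB p)"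
  proof (intro sum.cong refl)
    fix p assume p: "p \<in> {1..j+1}"
    show "r * ?G (p, True) + (1 - r) * ?G (p, False) = F a b + (1 - r) * ?IA p + (1 - r) * ?IB p"
      unfolding T[OF p] Fa[OF p] by (simp add: algebra_simps)
  qed
  also have "\<dots> = real (j + 1) * F a b + (1 - r) * (\<Sum>p=1..j+1. ?IA p) + (1 - r) * (\<Sum>p=1..j+1. ?IB p)"
    by (simp only: sum.distrib sum_distrib_left[symmetric] sum_constant) simp
  finally show ?thesis unfolding sA sB by (simp add: field_simps)
qed


definition psi :: "real \<Rightarrow> real \<Rightarrow> real" where "psi a b = b * (a - b) / (a^2 * (a + 1))"
definition Fz :: "real \<Rightarrow> real \<Rightarrow> real \<Rightarrow> real" where "Fz c a b = (b / a - c)^2 + psi a b"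
lemma Fz_eq: assumes "0 < a" shows "Fz c a b = ((b - c*a)^2 * (a+1) + b*(a-b)) / (a^2*(a+1))"
proof -
  have nz: "a \<noteq> 0" "a + 1 \<noteq> 0" using assms by auto
  have "b / a - c = (b - c*a) / a" using nz by (simp add: field_simps)
  then have "(b / a - c)^2 = (b - c*a)^2 / a^2" by (simp add: power_divide)
  also have "\<dots> = (b - c*a)^2 * (a+1) / (a^2*(a+1))" using nz by simp
  finally show ?thesis unfolding Fz_def psi_def by (simp add: add_divide_distrib)
qed
lemma Fz_key:
  assumes "0 < a"
  shows "a * (Fz c (a+1) b - Fz c a b) + b * (Fz c (a+1) (b+1) - Fz c (a+1) b) = 0"
proof -
  have p: "0 < a + 1" using assms by auto
  have nz: "a \<noteq> 0" "a + 1 \<noteq> 0" "a + 1 + 1 \<noteq> 0" using assms by auto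
  show ?thesis unfolding Fz_eq[OF assms] Fz_eq[OF p] using nz
    by (simp add: divide_simps power2_eq_square) (simp add: algebra_simps)
qed

definition aa :: "nat \<Rightarrow> (nat \<times> bool) list \<Rightarrow> nat \<Rightarrow> real" where
  "aa k h m = real (cA k (hp h) (hm h) m)"
definition bb :: "nat \<Rightarrow> (nat \<times> bool) list \<Rightarrow> nat \<Rightarrow> real" where
  "bb k h m = real (cB k (hp h) (hm h) m)"

lemma ab_snoc_local:
  assumes "m \<le> length h + 1"
  shows "aa k (h @ xs) m = aa k h m" "bb k (h @ xs) m = bb k h m"
proof -
  have "\<And>n. 2 \<le> n \<Longrightarrow> n \<le> m \<Longrightarrow> hp (h @ xs) n = hp h n \<and> hm (h @ xs) n = hm h n"
    using hp_append assms by auto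
  from cA_local[of m, OF this] show "aa k (h @ xs) m = aa k h m" "bb k (h @ xs) m = bb k h m"
    unfolding aa_def bb_def by auto
qed

lemma aa_ge1: "1 \<le> k \<Longrightarrow> 1 \<le> m \<Longrightarrow> 1 \<le> aa k h m"
  unfolding aa_def using cA_ge1 by auto

lemma bb_le_aa: "1 \<le> k \<Longrightarrow> bb k h m \<le> aa k h m"
  unfolding aa_def bb_def using cB_le_cA by auto

lemma bb_nonneg: "0 \<le> bb k h m"
  unfolding bb_def by auto

lemma Ex_cmult: "Exh r j (\<lambda>h. c * G h) = c * Exh r j G"
  by (simp add: Exh_def sum_distrib_left mult.left_commute)

lemma Ex_b_step:
  assumes "1 \<le> k" "k \<le> j + 1"
  shows "Exh r (Suc j) (\<lambda>h. bb k h (j + 2)) = (1 + (1 - r) / real (j + 1)) * Exh r j (\<lambda>h. bb k h (j + 1))"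
proof -
  have "Exh r (Suc j) (\<lambda>h. bb k h (j + 2)) = Exh r j (\<lambda>h. \<Sum>x\<in>{1..j+1} \<times> UNIV. ws r (j + 2) x * bb k (h @ [x]) (j + 2))"
    by (rule Ex_Suc)
  also have "\<dots> = Exh r j (\<lambda>h. (1 + (1 - r) / real (j + 1)) * bb k h (j + 1))"
  proof (rule Ex_cong)
    fix h assume "h \<in> Hs j"
    then have l: "length h = j" by (rule length_Hs)
    show "(\<Sum>x\<in>{1..j+1} \<times> UNIV. ws r (j + 2) x * bb k (h @ [x]) (j + 2)) = (1 + (1 - r) / real (j + 1)) * bb k h (j + 1)"
      using one_step[OF l assms, where F="\<lambda>a b. real b" and r=r] unfolding bb_def
      by (simp add: field_simps)
  qed
  also have "\<dots> = (1 + (1 - r) / real (j + 1)) * Exh r j (\<lambda>h. bb k h (j + 1))"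
    by (rule Ex_cmult)
  finally show ?thesis .
qed

lemma Ex_b_base: "Exh r (Suc j) (\<lambda>h. bb (j + 2) h (j + 2)) = r"
proof -
  have "Exh r (Suc j) (\<lambda>h. bb (j + 2) h (j + 2)) = Exh r j (\<lambda>h. \<Sum>x\<in>{1..j+1} \<times> UNIV. ws r (j + 2) x * bb (j + 2) (h @ [x]) (j + 2))"
    by (rule Ex_Suc)
  also have "\<dots> = Exh r j (\<lambda>_. r)"
  proof (rule Ex_cong)
    fix h assume "h \<in> Hs j"
    then have l: "length h = j" by (rule length_Hs)
    have e: "bb (j + 2) (h @ [x]) (j + 2) = (if snd x then 1 else 0)" for x
      using cB_at_k[of "j + 2" "hp (h @ [x])" "hm (h @ [x])"] l unfolding bb_def
      by (simp add: hm_def nth_append)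
    have "(\<Sum>x\<in>{1..j+1} \<times> UNIV. ws r (j + 2) x * bb (j + 2) (h @ [x]) (j + 2))
        = (\<Sum>p=1..j+1. r * (if snd (p, True) then 1 else 0) + (1 - r) * (if snd (p, False) then 1 else 0)) / real (j + 1)"
      unfolding e by (rule sum_ws)
    also have "\<dots> = r" by simp
    finally show "(\<Sum>x\<in>{1..j+1} \<times> UNIV. ws r (j + 2) x * bb (j + 2) (h @ [x]) (j + 2)) = r" .
  qed
  also have "\<dots> = r" by (rule Ex_const)
  finally show ?thesis .
qed

lemma Ex_b:
  assumes "2 \<le> k" "k \<le> N"
  shows "Exh r (N - 1) (\<lambda>h. bb k h N) = r * (\<Prod>m=k..<N. 1 + (1 - r) / real m)"
  using assms(2)
proof (induction N rule: dec_induct)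
  case base
  obtain j where kj: "k = j + 2" using assms(1) le_Suc_ex by (metis add.commute)
  then show ?case using Ex_b_base[of r j] by (simp add: kj)
next
  case (step n)
  obtain j where nj: "n = j + 1" using step.hyps assms(1) by (metis Suc_eq_plus1 Suc_pred' add_leD2 le_Suc_ex less_le_trans pos2) 
  have "Exh r (Suc n - 1) (\<lambda>h. bb k h (Suc n)) = Exh r (Suc j) (\<lambda>h. bb k h (j + 2))" by (simp add: nj)
  also have "\<dots> = (1 + (1 - r) / real (j + 1)) * Exh r j (\<lambda>h. bb k h (j + 1))"
    by (rule Ex_b_step) (use assms step.hyps nj in auto)
  also have "\<dots> = (1 + (1 - r) / real n) * (r * (\<Prod>m=k..<n. 1 + (1 - r) / real m))"
    using step.IH by (simp add: nj)
  also have "\<dots> = r * (\<Prod>m=k..<Suc n. 1 + (1 - r) / real m)"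
    using step.hyps by (simp add: prod.atLeastLessThan_Suc)
  finally show ?case .
qed


lemma inva_ineq:
  fixes a r m :: real
  assumes "1 \<le> a" "0 \<le> r" "r \<le> 1" "0 < m"
  shows "1 / a + (1 - r) / m * (a * (1 / (a + 1) - 1 / a)) \<le> (1 - (1 - r) / (2 * m)) * (1 / a)"
proof -
  have nz: "a \<noteq> 0" "a + 1 \<noteq> 0" using assms by auto
  have "a * (1 / (a + 1) - 1 / a) = a / (a + 1) - 1" using nz by (simp add: right_diff_distrib)
  also have "\<dots> = - 1 / (a + 1)" using nz by (simp add: field_simps)
  finally have e: "a * (1 / (a + 1) - 1 / a) = - 1 / (a + 1)" .
  have "(1 - r) / (2 * m) * (1 / a) \<le> (1 - r) / m * (1 / (a + 1))"
  proof -
    have "(1 - r) / (2 * m) * (1 / a) = ((1 - r) / m) * (1 / (2 * a))" by (simp add: field_simps)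
    also have "\<dots> \<le> ((1 - r) / m) * (1 / (a + 1))"
      using assms by (intro mult_left_mono divide_left_mono) auto
    finally show ?thesis .
  qed
  then show ?thesis unfolding e by (simp add: algebra_simps)
qed

lemma Ex_inva_step:
  assumes "1 \<le> k" "k \<le> j + 1" "0 \<le> r" "r \<le> 1"
  shows "Exh r (Suc j) (\<lambda>h. 1 / aa k h (j + 2)) \<le> (1 - (1 - r) / (2 * real (j + 1))) * Exh r j (\<lambda>h. 1 / aa k h (j + 1))"
proof -
  have "Exh r (Suc j) (\<lambda>h. 1 / aa k h (j + 2)) = Exh r j (\<lambda>h. \<Sum>x\<in>{1..j+1} \<times> UNIV. ws r (j + 2) x * (1 / aa k (h @ [x]) (j + 2)))"
    by (rule Ex_Suc)
  also have "\<dots> \<le> Exh r j (\<lambda>h. (1 - (1 - r) / (2 * real (j + 1))) * (1 / aa k h (j + 1)))"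
  proof (rule Ex_mono[OF assms(3,4)])
    fix h assume "h \<in> Hs j"
    then have l: "length h = j" by (rule length_Hs)
    have a1: "1 \<le> aa k h (j + 1)" using aa_ge1 assms by auto
    have "(\<Sum>x\<in>{1..j+1} \<times> UNIV. ws r (j + 2) x * (1 / aa k (h @ [x]) (j + 2)))
       = 1 / aa k h (j + 1) + (1 - r) / real (j + 1) * (aa k h (j + 1) * (1 / (aa k h (j + 1) + 1) - 1 / aa k h (j + 1)))"
      using one_step[OF l assms(1,2), where F="\<lambda>a b. 1 / real a" and r=r] unfolding aa_def
      by simp
    also have "\<dots> \<le> (1 - (1 - r) / (2 * real (j + 1))) * (1 / aa k h (j + 1))"
      by (rule inva_ineq) (use a1 assms in auto)
    finally show "(\<Sum>x\<in>{1..j+1} \<times> UNIV. ws r (j + 2) x * (1 / aa k (h @ [x]) (j + 2)))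
       \<le> (1 - (1 - r) / (2 * real (j + 1))) * (1 / aa k h (j + 1))" .
  qed
  also have "\<dots> = (1 - (1 - r) / (2 * real (j + 1))) * Exh r j (\<lambda>h. 1 / aa k h (j + 1))"
    by (rule Ex_cmult)
  finally show ?thesis .
qed

lemma Ex_inva:
  assumes "2 \<le> k" "k \<le> n" "0 \<le> r" "r \<le> 1"
  shows "Exh r (n - 1) (\<lambda>h. 1 / aa k h n) \<le> (1 / real k) * (\<Prod>m=k..<n. 1 - (1 - r) / (2 * real m))"
  using assms(2)
proof (induction n rule: dec_induct)
  case base
  have "aa k h k = real k" for h unfolding aa_def using cA_at_k assms(1) by simp
  then show ?case by (simp add: Ex_const)
next
  case (step n)
  obtain j where nj: "n = j + 1" using step.hyps assms(1) by (metis Suc_eq_plus1 Suc_pred' add_leD2 le_Suc_ex less_le_trans pos2)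
  have fnn: "0 \<le> 1 - (1 - r) / (2 * real n)"
    using assms step.hyps by (auto simp: field_simps)
  have "Exh r (Suc n - 1) (\<lambda>h. 1 / aa k h (Suc n)) = Exh r (Suc j) (\<lambda>h. 1 / aa k h (j + 2))" by (simp add: nj)
  also have "\<dots> \<le> (1 - (1 - r) / (2 * real (j + 1))) * Exh r j (\<lambda>h. 1 / aa k h (j + 1))"
    by (rule Ex_inva_step) (use assms step.hyps nj in auto)
  also have "\<dots> = (1 - (1 - r) / (2 * real n)) * Exh r (n - 1) (\<lambda>h. 1 / aa k h n)"
    using nj by simp
  also have "\<dots> \<le> (1 - (1 - r) / (2 * real n)) * ((1 / real k) * (\<Prod>m=k..<n. 1 - (1 - r) / (2 * real m)))"
    by (rule mult_left_mono[OF step.IH fnn])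
  also have "\<dots> = (1 / real k) * (\<Prod>m=k..<Suc n. 1 - (1 - r) / (2 * real m))"
    using step.hyps by (simp add: prod.atLeastLessThan_Suc)
  finally show ?case .
qed

lemma Fz_step:
  assumes "length h = j" "1 \<le> k" "k \<le> j + 1"
  shows "(\<Sum>x\<in>{1..j+1} \<times> UNIV. ws r (j + 2) x * Fz c (aa k (h @ [x]) (j + 2)) (bb k (h @ [x]) (j + 2)))
       = Fz c (aa k h (j + 1)) (bb k h (j + 1))"
proof -
  have a0: "0 < aa k h (j + 1)" using aa_ge1[OF assms(2), of "j+1" h] by simp
  show ?thesis
    using one_step[OF assms, where F="\<lambda>a b. Fz c (real a) (real b)" and r=r]
      Fz_key[OF a0, of c "bb k h (j + 1)"] unfolding aa_def bb_def
    by (simp add: add.commute)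
qed

lemma Ex_mart_step:
  assumes "1 \<le> k" "k \<le> N" "N \<le> j + 1"
  shows "Exh r (Suc j) (\<lambda>h. aa k h N ^ 2 * Fz (bb k h N / aa k h N) (aa k h (j + 2)) (bb k h (j + 2)))
       = Exh r j (\<lambda>h. aa k h N ^ 2 * Fz (bb k h N / aa k h N) (aa k h (j + 1)) (bb k h (j + 1)))"
proof -
  have "Exh r (Suc j) (\<lambda>h. aa k h N ^ 2 * Fz (bb k h N / aa k h N) (aa k h (j + 2)) (bb k h (j + 2)))
     = Exh r j (\<lambda>h. \<Sum>x\<in>{1..j+1} \<times> UNIV. ws r (j + 2) x * (aa k (h @ [x]) N ^ 2 *
          Fz (bb k (h @ [x]) N / aa k (h @ [x]) N) (aa k (h @ [x]) (j + 2)) (bb k (h @ [x]) (j + 2))))"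
    by (rule Ex_Suc)
  also have "\<dots> = Exh r j (\<lambda>h. aa k h N ^ 2 * Fz (bb k h N / aa k h N) (aa k h (j + 1)) (bb k h (j + 1)))"
  proof (rule Ex_cong)
    fix h assume "h \<in> Hs j"
    then have l: "length h = j" by (rule length_Hs)
    have kj: "k \<le> j + 1" using assms by linarith
    have loc: "aa k (h @ [x]) N = aa k h N" "bb k (h @ [x]) N = bb k h N" for x
      using ab_snoc_local[of N h k "[x]"] l assms by auto
    show "(\<Sum>x\<in>{1..j+1} \<times> UNIV. ws r (j + 2) x * (aa k (h @ [x]) N ^ 2 *
          Fz (bb k (h @ [x]) N / aa k (h @ [x]) N) (aa k (h @ [x]) (j + 2)) (bb k (h @ [x]) (j + 2))))
        = aa k h N ^ 2 * Fz (bb k h N / aa k h N) (aa k h (j + 1)) (bb k h (j + 1))"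
    proof -
      let ?c = "bb k h N / aa k h N"
      have "(\<Sum>x\<in>{1..j+1} \<times> UNIV. ws r (j + 2) x * (aa k h N ^ 2 *
          Fz ?c (aa k (h @ [x]) (j + 2)) (bb k (h @ [x]) (j + 2))))
         = aa k h N ^ 2 * (\<Sum>x\<in>{1..j+1} \<times> UNIV. ws r (j + 2) x * Fz ?c (aa k (h @ [x]) (j + 2)) (bb k (h @ [x]) (j + 2)))"
        by (simp add: sum_distrib_left mult.left_commute)
      also have "\<dots> = aa k h N ^ 2 * Fz ?c (aa k h (j + 1)) (bb k h (j + 1))"
        using Fz_step[OF l assms(1) kj, where r=r and c="?c"] by simp
      finally show ?thesis unfolding loc .
    qed
  qed
  finally show ?thesis .
qed

lemma Ex_mart:
  assumes "1 \<le> k" "k \<le> N" "N \<le> M"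
  shows "Exh r (M - 1) (\<lambda>h. aa k h N ^ 2 * Fz (bb k h N / aa k h N) (aa k h M) (bb k h M))
       = Exh r (N - 1) (\<lambda>h. aa k h N ^ 2 * Fz (bb k h N / aa k h N) (aa k h N) (bb k h N))"
  using assms(3)
proof (induction M rule: dec_induct)
  case base then show ?case by simp
next
  case (step n)
  obtain j where nj: "n = j + 1" using step.hyps assms by (metis Suc_eq_plus1 Suc_pred' le_trans less_le_trans le_neq_implies_less not_one_le_zero zero_less_iff_neq_zero)
  have "Exh r (Suc n - 1) (\<lambda>h. aa k h N ^ 2 * Fz (bb k h N / aa k h N) (aa k h (Suc n)) (bb k h (Suc n)))
      = Exh r (Suc j) (\<lambda>h. aa k h N ^ 2 * Fz (bb k h N / aa k h N) (aa k h (j + 2)) (bb k h (j + 2)))"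
    by (simp add: nj)
  also have "\<dots> = Exh r j (\<lambda>h. aa k h N ^ 2 * Fz (bb k h N / aa k h N) (aa k h (j + 1)) (bb k h (j + 1)))"
    by (rule Ex_mart_step) (use assms step.hyps nj in auto)
  also have "\<dots> = Exh r (N - 1) (\<lambda>h. aa k h N ^ 2 * Fz (bb k h N / aa k h N) (aa k h N) (bb k h N))"
    using step.IH by (simp add: nj)
  finally show ?case .
qed

lemma psi_nonneg: "0 \<le> b \<Longrightarrow> b \<le> a \<Longrightarrow> 0 \<le> psi a b"
  unfolding psi_def by (intro divide_nonneg_nonneg mult_nonneg_nonneg) auto

lemma psi_le: "1 \<le> a \<Longrightarrow> 0 \<le> b \<Longrightarrow> b \<le> a \<Longrightarrow> psi a b \<le> 1 / a"
proof -
  assume a: "1 \<le> a" "0 \<le> b" "b \<le> a"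
  have "b * (a - b) \<le> a * a" using a by (intro mult_mono) auto
  then have "b * (a - b) / (a^2 * (a + 1)) \<le> a * a / (a^2 * (a + 1))"
    using a by (intro divide_right_mono) auto
  also have "\<dots> = 1 / (a + 1)" using a by (simp add: power2_eq_square)
  also have "\<dots> \<le> 1 / a" using a by (simp add: frac_le)
  finally show ?thesis unfolding psi_def .
qed

lemma Ex_main:
  assumes "1 \<le> k" "k \<le> N" "N \<le> M" "0 \<le> r" "r \<le> 1"
  shows "Exh r (M - 1) (\<lambda>h. aa k h N ^ 2 * (bb k h M / aa k h M - bb k h N / aa k h N) ^ 2)
       \<le> Exh r (N - 1) (\<lambda>h. bb k h N)"
proof -
  have "Exh r (M - 1) (\<lambda>h. aa k h N ^ 2 * (bb k h M / aa k h M - bb k h N / aa k h N) ^ 2)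
     \<le> Exh r (M - 1) (\<lambda>h. aa k h N ^ 2 * Fz (bb k h N / aa k h N) (aa k h M) (bb k h M))"
  proof (rule Ex_mono[OF assms(4,5)])
    fix h
    have "0 \<le> psi (aa k h M) (bb k h M)" using bb_le_aa bb_nonneg assms by (intro psi_nonneg) auto
    then show "aa k h N ^ 2 * (bb k h M / aa k h M - bb k h N / aa k h N) ^ 2
        \<le> aa k h N ^ 2 * Fz (bb k h N / aa k h N) (aa k h M) (bb k h M)"
      unfolding Fz_def by (intro mult_left_mono) auto
  qed
  also have "\<dots> = Exh r (N - 1) (\<lambda>h. aa k h N ^ 2 * Fz (bb k h N / aa k h N) (aa k h N) (bb k h N))"
    by (rule Ex_mart) (use assms in auto)
  also have "\<dots> \<le> Exh r (N - 1) (\<lambda>h. bb k h N)"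
  proof (rule Ex_mono[OF assms(4,5)])
    fix h
    let ?a = "aa k h N" and ?b = "bb k h N"
    have a1: "1 \<le> ?a" using aa_ge1 assms by auto
    have b: "0 \<le> ?b" "?b \<le> ?a" using bb_le_aa bb_nonneg assms by auto
    have "?a ^ 2 * Fz (?b / ?a) ?a ?b = ?b * (?a - ?b) / (?a + 1)"
      using a1 unfolding Fz_def psi_def by (simp add: power2_eq_square)
    also have "\<dots> \<le> ?b * (?a + 1) / (?a + 1)"
      using a1 b by (intro divide_right_mono mult_left_mono) auto
    also have "\<dots> = ?b" using a1 by simp
    finally show "?a ^ 2 * Fz (?b / ?a) ?a ?b \<le> ?b" .
  qed
  finally show ?thesis .
qed


lemma harm_upper:
  assumes "2 \<le> k" "k \<le> N"
  shows "(\<Sum>m=k..<N. 1 / real m) \<le> ln (real N - 1) - ln (real k - 1)"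
  using assms(2)
proof (induction N rule: dec_induct)
  case base then show ?case by simp
next
  case (step n)
  have n2: "2 \<le> n" using assms step.hyps by linarith
  have "ln ((real n - 1) / real n) \<le> (real n - 1) / real n - 1"
    using n2 by (intro ln_le_minus_one) auto
  also have "\<dots> = - (1 / real n)" using n2 by (simp add: field_simps)
  finally have "1 / real n \<le> ln (real n) - ln (real n - 1)"
    using n2 by (simp add: ln_div)
  then show ?case using step.IH step.hyps by (simp add: sum.atLeastLessThan_Suc)
qed

lemma harm_lower:
  assumes "1 \<le> k" "k \<le> N"
  shows "ln (real N) - ln (real k) \<le> (\<Sum>m=k..<N. 1 / real m)"
  using assms(2)
proof (induction N rule: dec_induct)
  case base then show ?case by simp
next
  case (step n)
  have n1: "1 \<le> n" using assms step.hyps by linarith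
  have "ln (1 + 1 / real n) \<le> 1 / real n"
    using n1 by (intro ln_add_one_self_le_self) auto
  moreover have "ln (1 + 1 / real n) = ln (real (Suc n)) - ln (real n)"
  proof -
    have "1 + 1 / real n = real (Suc n) / real n" using n1 by (simp add: field_simps)
    then show ?thesis using n1 by (simp add: ln_div)
  qed
  ultimately show ?case using step.IH step.hyps by (simp add: sum.atLeastLessThan_Suc)
qed

lemma prod_upper:
  assumes "2 \<le> k" "k \<le> N" "0 < r" "r < 1"
  shows "(\<Prod>m=k..<N. 1 + (1 - r) / real m) \<le> 2 * (real N / real k) powr (1 - r)"
proof -
  have k1: "1 < real k" using assms by auto
  have "(\<Prod>m=k..<N. 1 + (1 - r) / real m) \<le> (\<Prod>m=k..<N. exp ((1 - r) / real m))"
    by (intro prod_mono conjI exp_ge_add_one_self) (use assms in auto)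
  also have "\<dots> = exp ((1 - r) * (\<Sum>m=k..<N. 1 / real m))"
    by (simp add: exp_sum[symmetric] sum_distrib_left)
  also have "\<dots> \<le> exp ((1 - r) * (ln (real N - 1) - ln (real k - 1)))"
    using harm_upper[OF assms(1,2)] assms by (intro exp_mono mult_left_mono) auto
  also have "\<dots> = ((real N - 1) / (real k - 1)) powr (1 - r)"
    using assms k1 by (simp add: powr_def ln_div)
  also have "\<dots> \<le> (2 * (real N / real k)) powr (1 - r)"
  proof (intro powr_mono2)
    have A: "2 * (real N + 1) \<le> (real N + 1) * real k"
    proof -
      have "2 * (real N + 1) \<le> real k * (real N + 1)"
        using assms by (intro mult_right_mono) auto
      then show ?thesis by (simp add: mult.commute)
    qed
    then have B: "2 * real N / real k \<le> real N + 1" using k1 by (simp add: divide_le_eq algebra_simps)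
    have C: "(2 * real N / real k) * (real k - 1) = 2 * real N - 2 * real N / real k"
      using k1 by (simp add: field_simps)
    have "real N - 1 \<le> (2 * (real N / real k)) * (real k - 1)" using B C by simp
    then show "(real N - 1) / (real k - 1) \<le> 2 * (real N / real k)"
      using k1 by (simp add: pos_divide_le_eq)
  qed (use assms k1 in auto)
  also have "\<dots> = 2 powr (1 - r) * (real N / real k) powr (1 - r)"
    using powr_mult[of 2 "real N / real k" "1 - r"] by simp
  also have "\<dots> \<le> 2 * (real N / real k) powr (1 - r)"
  proof (intro mult_right_mono)
    show "2 powr (1 - r) \<le> 2" using powr_mono[of "1 - r" 1 2] assms by simp
  qed auto
  finally show ?thesis .
qed

lemma prod_lower:
  assumes "1 \<le> k" "k \<le> n" "0 < c" "c \<le> 1"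
  shows "(\<Prod>m=k..<n. 1 - c / real m) \<le> (real k / real n) powr c"
proof -
  have "(\<Prod>m=k..<n. 1 - c / real m) \<le> (\<Prod>m=k..<n. exp (- (c / real m)))"
  proof (intro prod_mono conjI)
    fix m assume "m \<in> {k..<n}"
    then have "1 \<le> real m" using assms by auto
    then show "0 \<le> 1 - c / real m" using assms by (simp add: field_simps)
    show "1 - c / real m \<le> exp (- (c / real m))" using exp_ge_add_one_self[of "- (c / real m)"] by simp
  qed
  also have "\<dots> = exp (- c * (\<Sum>m=k..<n. 1 / real m))"
    by (simp add: exp_sum[symmetric] sum_distrib_left sum_negf)
  also have "\<dots> \<le> exp (- c * (ln (real n) - ln (real k)))"
    using harm_lower[OF assms(1,2)] assms by (intro exp_mono) (simp add: mult_left_mono)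
  also have "\<dots> = (real k / real n) powr c"
    using assms by (simp add: powr_def ln_div algebra_simps)
  finally show ?thesis .
qed

lemma powr_tend0: "0 < c \<Longrightarrow> ((\<lambda>n::nat. real n powr (-c)) \<longlongrightarrow> 0) sequentially"
  by real_asymp

lemma powr_tend: assumes "0 < c" shows "((\<lambda>n::nat. (real k / real n) powr c) \<longlongrightarrow> 0) sequentially"
proof -
  have "((\<lambda>n::nat. real k powr c * real n powr (-c)) \<longlongrightarrow> real k powr c * 0) sequentially"
    by (intro tendsto_mult tendsto_const powr_tend0 assms)
  moreover have "eventually (\<lambda>n. real k powr c * real n powr (-c) = (real k / real n) powr c) sequentially"
    using eventually_gt_at_top[of 0]
    by eventually_elim (simp add: powr_divide powr_minus_divide)
  ultimately show ?thesis by (simp add: tendsto_cong)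
qed


definition Zn :: "nat \<Rightarrow> nat \<Rightarrow> (nat \<times> bool) list \<Rightarrow> nat \<Rightarrow> real" where
  "Zn k n h m = Fz (bb k h n / aa k h n) (aa k h m) (bb k h m)"

definition Yv :: "nat \<Rightarrow> nat \<Rightarrow> real \<Rightarrow> nat \<Rightarrow> (nat \<times> bool) list \<Rightarrow> real" where
  "Yv k n l L h = (if \<exists>m\<in>{n..L+1}. l \<le> Zn k n h m then l else Zn k n h (L + 1))"

lemma ws_nonneg: "0 \<le> r \<Longrightarrow> r \<le> 1 \<Longrightarrow> 0 \<le> ws r n x"
  unfolding ws_def by auto

lemma Zn_local: "m \<le> length h + 1 \<Longrightarrow> n \<le> length h + 1 \<Longrightarrow> Zn k n (h @ xs) m = Zn k n h m"
  unfolding Zn_def using ab_snoc_local by simp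

lemma Zn_nonneg: "1 \<le> k \<Longrightarrow> 0 \<le> Zn k n h m"
  unfolding Zn_def Fz_def using psi_nonneg[OF bb_nonneg bb_le_aa] by (simp add: add_nonneg_nonneg)

lemma Yv_nonneg: "1 \<le> k \<Longrightarrow> 0 \<le> l \<Longrightarrow> 0 \<le> Yv k n l L h"
  unfolding Yv_def using Zn_nonneg by auto

lemma ville_step:
  assumes "1 \<le> k" "k \<le> n" "n \<le> L + 1" "0 \<le> r" "r \<le> 1"
  shows "Exh r (Suc L) (Yv k n l (Suc L)) \<le> Exh r L (Yv k n l L)"
proof -
  have "Exh r (Suc L) (Yv k n l (Suc L)) = Exh r L (\<lambda>h. \<Sum>x\<in>{1..L+1} \<times> UNIV. ws r (L + 2) x * Yv k n l (Suc L) (h @ [x]))"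
    by (rule Ex_Suc)
  also have "\<dots> \<le> Exh r L (Yv k n l L)"
  proof (rule Ex_mono[OF assms(4,5)])
    fix h assume "h \<in> Hs L"
    then have len: "length h = L" by (rule length_Hs)
    have loc: "Zn k n (h @ [x]) m = Zn k n h m" if "m \<le> L + 1" for m x
      using Zn_local[of m h n k "[x]"] that len assms by simp
    show "(\<Sum>x\<in>{1..L+1} \<times> UNIV. ws r (L + 2) x * Yv k n l (Suc L) (h @ [x])) \<le> Yv k n l L h"
    proof (cases "\<exists>m\<in>{n..L+1}. l \<le> Zn k n h m")
      case True
      have "Yv k n l (Suc L) (h @ [x]) = l" for x
      proof -
        obtain m where m: "m \<in> {n..L+1}" "l \<le> Zn k n h m" using True by blast
        then have "m \<in> {n..Suc L + 1}" "l \<le> Zn k n (h @ [x]) m" using loc[of m x] by auto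
        then show ?thesis unfolding Yv_def by auto
      qed
      then have "(\<Sum>x\<in>{1..L+1} \<times> UNIV. ws r (L + 2) x * Yv k n l (Suc L) (h @ [x])) = l"
      proof -
        have nz: "1 + real L \<noteq> 0" by (smt (verit) of_nat_0_le_iff)
        have e1: "l + l * real L = l * (1 + real L)" by (simp add: algebra_simps)
        have d: "(l + l * real L) / (1 + real L) = l" unfolding e1 using nz by simp
        show ?thesis
          using sum_ws[where g="\<lambda>_. l" and j=L and r=r] \<open>\<And>x. Yv k n l (Suc L) (h @ [x]) = l\<close>
          by (simp add: algebra_simps d)
      qed
      also have "l = Yv k n l L h" using True unfolding Yv_def by simp
      finally show ?thesis by simp
    next
      case False
      have le: "Yv k n l (Suc L) (h @ [x]) \<le> Zn k n (h @ [x]) (L + 2)" for x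
      proof (cases "\<exists>m\<in>{n..Suc L + 1}. l \<le> Zn k n (h @ [x]) m")
        case True
        then obtain m where m: "m \<in> {n..Suc L + 1}" "l \<le> Zn k n (h @ [x]) m" by blast
        have "m = L + 2"
        proof (rule ccontr)
          assume "m \<noteq> L + 2"
          then have "m \<in> {n..L+1}" using m by auto
          then show False using False m loc[of m x] by auto
        qed
        then show ?thesis using True m unfolding Yv_def by auto
      next
        case False then show ?thesis unfolding Yv_def by simp
      qed
      have "(\<Sum>x\<in>{1..L+1} \<times> UNIV. ws r (L + 2) x * Yv k n l (Suc L) (h @ [x]))
          \<le> (\<Sum>x\<in>{1..L+1} \<times> UNIV. ws r (L + 2) x * Zn k n (h @ [x]) (L + 2))"
        by (intro sum_mono mult_left_mono le ws_nonneg assms)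
      also have "\<dots> = (\<Sum>x\<in>{1..L+1} \<times> UNIV. ws r (L + 2) x *
           Fz (bb k h n / aa k h n) (aa k (h @ [x]) (L + 2)) (bb k (h @ [x]) (L + 2)))"
        unfolding Zn_def using ab_snoc_local[of n h k] len assms by simp
      also have "\<dots> = Fz (bb k h n / aa k h n) (aa k h (L + 1)) (bb k h (L + 1))"
        by (rule Fz_step[OF len assms(1)]) (use assms in linarith)
      also have "\<dots> = Yv k n l L h" using False unfolding Yv_def Zn_def by simp
      finally show ?thesis .
    qed
  qed
  finally show ?thesis .
qed

lemma ville_Ex:
  assumes "1 \<le> k" "k \<le> n" "n \<le> L + 1" "0 \<le> r" "r \<le> 1"
  shows "Exh r L (Yv k n l L) \<le> Exh r (n - 1) (\<lambda>h. 1 / aa k h n)"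
proof -
  have n1: "n - 1 \<le> L" using assms by linarith
  have "Exh r L (Yv k n l L) \<le> Exh r (n - 1) (Yv k n l (n - 1))"
    using n1
  proof (induction L rule: dec_induct)
    case base then show ?case by simp
  next
    case (step L)
    have "Exh r (Suc L) (Yv k n l (Suc L)) \<le> Exh r L (Yv k n l L)"
      by (rule ville_step) (use assms step.hyps in auto)
    then show ?case using step.IH by linarith
  qed
  also have "\<dots> \<le> Exh r (n - 1) (\<lambda>h. 1 / aa k h n)"
  proof (rule Ex_mono[OF assms(4,5)])
    fix h
    have nn: "n - 1 + 1 = n" using assms by linarith
    have "Yv k n l (n - 1) h \<le> Zn k n h n" unfolding Yv_def nn by auto
    also have "Zn k n h n = psi (aa k h n) (bb k h n)"
      unfolding Zn_def Fz_def using aa_ge1[of k n h] assms by simp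
    also have "\<dots> \<le> 1 / aa k h n"
      by (rule psi_le) (use aa_ge1 bb_nonneg bb_le_aa assms in auto)
    finally show "Yv k n l (n - 1) h \<le> 1 / aa k h n" .
  qed
  finally show ?thesis .
qed

lemma ville_event:
  assumes "1 \<le> k" "k \<le> n" "n \<le> L + 1" "0 \<le> r" "r \<le> 1" "0 < e"
  shows "Exh r L (\<lambda>h. if \<exists>m\<in>{n..L+1}. e \<le> \<bar>bb k h m / aa k h m - bb k h n / aa k h n\<bar> then 1 else 0)
     \<le> Exh r (n - 1) (\<lambda>h. 1 / aa k h n) / e^2"
proof -
  let ?I = "\<lambda>h. if \<exists>m\<in>{n..L+1}. e \<le> \<bar>bb k h m / aa k h m - bb k h n / aa k h n\<bar> then 1 else 0 :: real"
  have "e^2 * Exh r L ?I = Exh r L (\<lambda>h. e^2 * ?I h)" by (rule Ex_cmult[symmetric])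
  also have "\<dots> \<le> Exh r L (Yv k n (e^2) L)"
  proof (rule Ex_mono[OF assms(4,5)])
    fix h
    show "e^2 * ?I h \<le> Yv k n (e^2) L h"
    proof (cases "\<exists>m\<in>{n..L+1}. e \<le> \<bar>bb k h m / aa k h m - bb k h n / aa k h n\<bar>")
      case True
      then obtain m where m: "m \<in> {n..L+1}" "e \<le> \<bar>bb k h m / aa k h m - bb k h n / aa k h n\<bar>" by blast
      have "e^2 \<le> (bb k h m / aa k h m - bb k h n / aa k h n)^2"
        using m(2) assms(6) by (metis abs_ge_zero abs_le_square_iff power2_abs abs_of_pos)
      also have "\<dots> \<le> Zn k n h m"
        unfolding Zn_def Fz_def using psi_nonneg[OF bb_nonneg bb_le_aa[OF assms(1)]] by simp
      finally have "\<exists>m\<in>{n..L+1}. e^2 \<le> Zn k n h m" using m(1) by blast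
      then show ?thesis using True unfolding Yv_def by simp
    next
      case False
      then show ?thesis using Yv_nonneg[OF assms(1), of "e^2"] by simp
    qed
  qed
  also have "\<dots> \<le> Exh r (n - 1) (\<lambda>h. 1 / aa k h n)"
    by (rule ville_Ex) (use assms in auto)
  finally show ?thesis using assms(6) by (simp add: field_simps mult.commute)
qed


definition hist :: "(nat \<Rightarrow> 'a \<Rightarrow> nat) \<Rightarrow> (nat \<Rightarrow> 'a \<Rightarrow> bool) \<Rightarrow> nat \<Rightarrow> 'a \<Rightarrow> (nat \<times> bool) list" where
  "hist par mut L \<omega> = map (\<lambda>n. (par n \<omega>, mut n \<omega>)) [2..<L+2]"

lemma length_hist[simp]: "length (hist par mut L \<omega>) = L"
  by (simp add: hist_def del: upt_Suc)

lemma hist_nth: "i < L \<Longrightarrow> hist par mut L \<omega> ! i = (par (i + 2) \<omega>, mut (i + 2) \<omega>)"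
  unfolding hist_def by (subst nth_map_upt) (auto simp: add.commute)

lemma hp_hist: "2 \<le> n \<Longrightarrow> n \<le> L + 1 \<Longrightarrow> hp (hist par mut L \<omega>) n = par n \<omega> \<and> hm (hist par mut L \<omega>) n = mut n \<omega>"
proof -
  assume a: "2 \<le> n" "n \<le> L + 1"
  then have e: "n - 2 + 2 = n" "n - 2 < L" by auto
  show ?thesis using hist_nth[OF e(2), of par mut \<omega>] unfolding e(1) by (simp add: hp_def hm_def)
qed

lemma cA_hist:
  assumes "m \<le> L + 1"
  shows "cA k (\<lambda>n. par n \<omega>) (\<lambda>n. mut n \<omega>) m = cA k (hp (hist par mut L \<omega>)) (hm (hist par mut L \<omega>)) m"
    "cB k (\<lambda>n. par n \<omega>) (\<lambda>n. mut n \<omega>) m = cB k (hp (hist par mut L \<omega>)) (hm (hist par mut L \<omega>)) m"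
  using cA_local[of m "\<lambda>n. par n \<omega>" "hp (hist par mut L \<omega>)" "\<lambda>n. mut n \<omega>" "hm (hist par mut L \<omega>)" k]
    hp_hist[of _ L par mut \<omega>] assms by auto

lemma Vfrac_hist: "m \<le> L + 1 \<Longrightarrow>
  Vfrac (\<lambda>n. par n \<omega>) (\<lambda>n. mut n \<omega>) k m = bb k (hist par mut L \<omega>) m / aa k (hist par mut L \<omega>) m"
  unfolding Vfrac_cA aa_def bb_def using cA_hist[where L=L and m=m and k=k and par=par and mut=mut and \<omega>=\<omega>] by simp

lemma Xfrac_hist: "m \<le> L + 1 \<Longrightarrow>
  Xfrac (\<lambda>n. par n \<omega>) (\<lambda>n. mut n \<omega>) k m = aa k (hist par mut L \<omega>) m / real m"
  unfolding Xfrac_cA aa_def using cA_hist[where L=L and m=m and k=k and par=par and mut=mut and \<omega>=\<omega>] by simp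

lemma hist_eq_iff: "hist par mut L \<omega> = h \<longleftrightarrow> length h = L \<and> (\<forall>i<L. (par (i + 2) \<omega>, mut (i + 2) \<omega>) = h ! i)"
  by (auto simp: list_eq_iff_nth_eq hist_nth)

locale yule = prob_space M for M :: "'a measure" +
  fixes r :: real and par :: "nat \<Rightarrow> 'a \<Rightarrow> nat" and mut :: "nat \<Rightarrow> 'a \<Rightarrow> bool"
  assumes r0: "0 < r" and r1: "r < 1"
  and indep: "indep_vars (\<lambda>_. count_space UNIV) (\<lambda>n \<omega>. (par n \<omega>, mut n \<omega>)) {2..}"
  and distr: "\<And>n. n \<ge> 2 \<Longrightarrow> distr M (count_space UNIV) (\<lambda>\<omega>. (par n \<omega>, mut n \<omega>)) =
                  measure_pmf (pair_pmf (pmf_of_set {1..n-1}) (bernoulli_pmf r))"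
begin

lemma xi_meas: "2 \<le> n \<Longrightarrow> (\<lambda>\<omega>. (par n \<omega>, mut n \<omega>)) \<in> measurable M (count_space UNIV)"
  using indep unfolding indep_vars_def by auto

lemma xi_prob: "2 \<le> n \<Longrightarrow> prob ((\<lambda>\<omega>. (par n \<omega>, mut n \<omega>)) -` {a} \<inter> space M) = ws r n a"
proof -
  assume n: "2 \<le> n"
  have "prob ((\<lambda>\<omega>. (par n \<omega>, mut n \<omega>)) -` {a} \<inter> space M)
      = measure (distr M (count_space UNIV) (\<lambda>\<omega>. (par n \<omega>, mut n \<omega>))) {a}"
    by (rule measure_distr[symmetric]) (use xi_meas n in auto)
  also have "\<dots> = pmf (pair_pmf (pmf_of_set {1..n-1}) (bernoulli_pmf r)) a"
    using distr[OF n] by (simp add: measure_pmf_single)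
  also have "\<dots> = ws r n a"
  proof -
    obtain p b where a: "a = (p, b)" by (cases a)
    have ne: "{1..n-1} \<noteq> {}" using n by auto
    show ?thesis using r0 r1 ne unfolding a
      by (cases b) (simp_all add: pmf_pair ws_def indicator_def)
  qed
  finally show ?thesis .
qed

lemma hist_set:
  assumes "length h = L" "1 \<le> L"
  shows "{\<omega> \<in> space M. hist par mut L \<omega> = h} = (\<Inter>n\<in>{2..L+1}. (\<lambda>\<omega>. (par n \<omega>, mut n \<omega>)) -` {h ! (n - 2)} \<inter> space M)"
proof (intro equalityI subsetI)
  fix \<omega> assume "\<omega> \<in> {\<omega> \<in> space M. hist par mut L \<omega> = h}"
  then have w: "\<omega> \<in> space M" "\<forall>i<L. (par (i + 2) \<omega>, mut (i + 2) \<omega>) = h ! i"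
    using hist_eq_iff[of par mut L \<omega> h] by auto
  show "\<omega> \<in> (\<Inter>n\<in>{2..L+1}. (\<lambda>\<omega>. (par n \<omega>, mut n \<omega>)) -` {h ! (n - 2)} \<inter> space M)"
  proof (intro INT_I)
    fix n assume "n \<in> {2..L+1}"
    then have "n - 2 < L" "n - 2 + 2 = n" by auto
    then show "\<omega> \<in> (\<lambda>\<omega>. (par n \<omega>, mut n \<omega>)) -` {h ! (n - 2)} \<inter> space M"
      using w spec[OF w(2), of "n - 2"] by auto
  qed
next
  fix \<omega> assume w: "\<omega> \<in> (\<Inter>n\<in>{2..L+1}. (\<lambda>\<omega>. (par n \<omega>, mut n \<omega>)) -` {h ! (n - 2)} \<inter> space M)"
  have "(par (i + 2) \<omega>, mut (i + 2) \<omega>) = h ! i" if "i < L" for i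
    using w that by auto
  moreover have "\<omega> \<in> space M" using w assms by auto
  ultimately show "\<omega> \<in> {\<omega> \<in> space M. hist par mut L \<omega> = h}"
    using hist_eq_iff[of par mut L \<omega> h] assms by auto
qed

lemma hist_set_sets: "{\<omega> \<in> space M. hist par mut L \<omega> = h} \<in> sets M"
proof (cases "length h = L")
  case False
  then have e: "{\<omega> \<in> space M. hist par mut L \<omega> = h} = {}" by auto
  show ?thesis unfolding e by simp
next
  case True
  show ?thesis
  proof (cases "L = 0")
    case True
    then have e: "{\<omega> \<in> space M. hist par mut L \<omega> = h} = space M" using \<open>length h = L\<close> by (auto simp: hist_def)
    show ?thesis unfolding e by simp
  next
    case False
    then have L1: "1 \<le> L" by simp
    show ?thesis unfolding hist_set[OF True L1] using xi_meas L1
      by (intro sets.finite_INT) (auto intro!: measurable_sets)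
  qed
qed

lemma hist_meas: "hist par mut L \<in> measurable M (count_space UNIV)"
proof -
  have "hist par mut L -` {h} \<inter> space M = {\<omega> \<in> space M. hist par mut L \<omega> = h}" for h by auto
  then show ?thesis by (simp add: measurable_count_space_eq2_countable hist_set_sets)
qed

lemma prob_hist:
  assumes "length h = L"
  shows "prob {\<omega> \<in> space M. hist par mut L \<omega> = h} = w r h"
proof (cases "L = 0")
  case True
  then have e: "{\<omega> \<in> space M. hist par mut L \<omega> = h} = space M" using assms by (auto simp: hist_def)
  show ?thesis unfolding e using True assms by (simp add: w_def prob_space)
next
  case False
  then have L1: "1 \<le> L" by simp
  have "prob {\<omega> \<in> space M. hist par mut L \<omega> = h}
      = (\<Prod>n\<in>{2..L+1}. prob ((\<lambda>\<omega>. (par n \<omega>, mut n \<omega>)) -` {h ! (n - 2)} \<inter> space M))"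
    unfolding hist_set[OF assms L1] by (rule indep_varsD[OF indep]) (use L1 in auto)
  also have "\<dots> = (\<Prod>n\<in>{2..L+1}. ws r n (h ! (n - 2)))"
    by (intro prod.cong refl xi_prob) auto
  also have "\<dots> = (\<Prod>i<L. ws r (i + 2) (h ! i))"
  proof -
    have "{2..L+1} = (\<lambda>i. i + 2) ` {..<L}"
    proof (intro equalityI subsetI)
      fix x assume "x \<in> {2..L+1}"
      then have "x = (x - 2) + 2" "x - 2 \<in> {..<L}" by auto
      then show "x \<in> (\<lambda>i. i + 2) ` {..<L}" by (rule image_eqI)
    qed auto
    moreover have "inj_on (\<lambda>i. i + 2) {..<L}" by (auto simp: inj_on_def)
    ultimately show ?thesis by (simp add: prod.reindex)
  qed
  finally show ?thesis using assms by (simp add: w_def)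
qed

lemma AE_hist: "AE \<omega> in M. hist par mut L \<omega> \<in> Hs L"
proof -
  let ?A = "\<lambda>h. {\<omega> \<in> space M. hist par mut L \<omega> = h}"
  have "prob (\<Union>h\<in>Hs L. ?A h) = (\<Sum>h\<in>Hs L. prob (?A h))"
    by (rule finite_measure_finite_Union) (auto simp: finite_Hs hist_set_sets disjoint_family_on_def)
  also have "\<dots> = (\<Sum>h\<in>Hs L. w r h)"
    by (intro sum.cong refl prob_hist length_Hs) auto
  also have "\<dots> = 1" using Ex_const[of r L 1] by (simp add: Exh_def)
  finally have "AE \<omega> in M. \<omega> \<in> (\<Union>h\<in>Hs L. ?A h)" by (rule AE_prob_1)
  then show ?thesis by eventually_elim auto
qed

lemma integral_hist: "(\<integral>\<omega>. G (hist par mut L \<omega>) \<partial>M) = Exh r L G"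
proof -
  let ?A = "\<lambda>h. {\<omega> \<in> space M. hist par mut L \<omega> = h}"
  have "(\<integral>\<omega>. G (hist par mut L \<omega>) \<partial>M) = (\<integral>\<omega>. (\<Sum>h\<in>Hs L. G h * indicator (?A h) \<omega>) \<partial>M)"
  proof (rule integral_cong_AE)
    show "(\<lambda>\<omega>. G (hist par mut L \<omega>)) \<in> borel_measurable M"
      by (rule measurable_compose[OF hist_meas borel_measurable_count_space])
    show "(\<lambda>\<omega>. \<Sum>h\<in>Hs L. G h * indicator (?A h) \<omega>) \<in> borel_measurable M"
      using hist_set_sets by (intro borel_measurable_sum borel_measurable_times borel_measurable_const borel_measurable_indicator) auto
    show "AE \<omega> in M. G (hist par mut L \<omega>) = (\<Sum>h\<in>Hs L. G h * indicator (?A h) \<omega>)"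
      using AE_hist[of L] AE_space
    proof eventually_elim
      case (elim \<omega>)
      have "(\<Sum>h\<in>Hs L. G h * indicator (?A h) \<omega>) = (\<Sum>h\<in>Hs L. if hist par mut L \<omega> = h then G h else 0)"
        using elim by (intro sum.cong refl) (auto simp: indicator_def)
      also have "\<dots> = G (hist par mut L \<omega>)" using elim finite_Hs by simp
      finally show ?case by simp
    qed
  qed
  also have "\<dots> = (\<Sum>h\<in>Hs L. (\<integral>\<omega>. G h * indicator (?A h) \<omega> \<partial>M))"
  proof (rule Bochner_Integration.integral_sum)
    fix h
    have "integrable M (indicator (?A h) :: 'a \<Rightarrow> real)"
      by (rule integrable_real_indicator) (simp_all add: less_top[symmetric] hist_set_sets)
    then show "integrable M (\<lambda>\<omega>. G h * indicator (?A h) \<omega>)" by (rule integrable_mult_right)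
  qed
  also have "\<dots> = (\<Sum>h\<in>Hs L. G h * w r h)"
  proof (intro sum.cong refl)
    fix h assume "h \<in> Hs L"
    then have "length h = L" by (rule length_Hs)
    have e: "?A h \<inter> space M = ?A h" by auto
    have i: "(\<integral>\<omega>. indicator (?A h) \<omega> \<partial>M) = w r h"
      using prob_hist[OF \<open>length h = L\<close>] by (simp add: e)
    show "(\<integral>\<omega>. G h * indicator (?A h) \<omega> \<partial>M) = G h * w r h"
      using i by simp
  qed
  finally show ?thesis by (simp add: Exh_def mult.commute)
qed

end


context yule
begin

definition V :: "nat \<Rightarrow> nat \<Rightarrow> 'a \<Rightarrow> real" where
  "V k m \<omega> = Vfrac (\<lambda>n. par n \<omega>) (\<lambda>n. mut n \<omega>) k m"
definition X :: "nat \<Rightarrow> nat \<Rightarrow> 'a \<Rightarrow> real" where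
  "X k m \<omega> = Xfrac (\<lambda>n. par n \<omega>) (\<lambda>n. mut n \<omega>) k m"

lemma V_meas[measurable]: "V k m \<in> borel_measurable M"
proof -
  have "V k m = (\<lambda>h. bb k h m / aa k h m) \<circ> hist par mut m"
    by (rule ext) (simp add: V_def Vfrac_hist)
  then show ?thesis
    using measurable_comp[OF hist_meas borel_measurable_count_space] by metis
qed

lemma X_meas[measurable]: "X k m \<in> borel_measurable M"
proof -
  have "X k m = (\<lambda>h. aa k h m / real m) \<circ> hist par mut m"
    by (rule ext) (simp add: X_def Xfrac_hist)
  then show ?thesis
    using measurable_comp[OF hist_meas borel_measurable_count_space] by metis
qed

lemma ratio01: "0 \<le> b \<Longrightarrow> b \<le> a \<Longrightarrow> 0 \<le> b / a \<and> b / a \<le> (1::real)"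
  by (cases "a = 0") (auto simp: divide_le_eq_1)

lemma V_01: "1 \<le> k \<Longrightarrow> 0 \<le> V k m \<omega> \<and> V k m \<omega> \<le> 1"
  unfolding V_def Vfrac_cA using cB_le_cA[of k] by (intro ratio01) auto

lemma X_01: "0 \<le> X k m \<omega> \<and> X k m \<omega> \<le> 1"
  unfolding X_def Xfrac_cA using cA_le[of k _ _ m] by (intro ratio01) auto

lemma fin_bound:
  assumes "2 \<le> k" "k \<le> N" "N \<le> Mh"
  shows "(\<integral>\<omega>. (X k N \<omega>)^2 * (V k Mh \<omega> - V k N \<omega>)^2 \<partial>M)
       \<le> r * (2 * (real N / real k) powr (1 - r)) / (real N)^2"
proof -
  let ?L = "Mh - 1"
  let ?G = "\<lambda>h. (aa k h N / real N)^2 * (bb k h Mh / aa k h Mh - bb k h N / aa k h N)^2"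
  have L: "N \<le> ?L + 1" "Mh \<le> ?L + 1" using assms by auto
  have "(\<integral>\<omega>. (X k N \<omega>)^2 * (V k Mh \<omega> - V k N \<omega>)^2 \<partial>M) = (\<integral>\<omega>. ?G (hist par mut ?L \<omega>) \<partial>M)"
    by (rule Bochner_Integration.integral_cong[OF refl]) (simp add: X_def V_def Xfrac_hist[OF L(1)] Vfrac_hist[OF L(1)] Vfrac_hist[OF L(2)])
  also have "\<dots> = Exh r ?L ?G" by (rule integral_hist)
  also have "\<dots> = (1 / (real N)^2) * Exh r ?L (\<lambda>h. aa k h N ^ 2 * (bb k h Mh / aa k h Mh - bb k h N / aa k h N) ^ 2)"
    by (subst Ex_cmult[symmetric]) (simp add: power_divide)
  also have "\<dots> \<le> (1 / (real N)^2) * Exh r (N - 1) (\<lambda>h. bb k h N)"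
    using assms r0 r1 by (intro mult_left_mono) (simp_all add: Ex_main[where k=k and N=N and M=Mh and r=r, simplified])
  also have "\<dots> = (1 / (real N)^2) * (r * (\<Prod>m=k..<N. 1 + (1 - r) / real m))"
    using Ex_b[OF assms(1,2), of r] by simp
  also have "\<dots> \<le> (1 / (real N)^2) * (r * (2 * (real N / real k) powr (1 - r)))"
    using prod_upper[OF assms(1,2) r0 r1] r0 by (intro mult_left_mono) auto
  finally show ?thesis by simp
qed

end


context yule
begin

lemma event_eq:
  assumes "n \<le> L + 1"
  shows "{\<omega> \<in> space M. \<exists>m\<in>{n..L+1}. e \<le> \<bar>V k m \<omega> - V k n \<omega>\<bar>}
       = hist par mut L -` {h. \<exists>m\<in>{n..L+1}. e \<le> \<bar>bb k h m / aa k h m - bb k h n / aa k h n\<bar>} \<inter> space M"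
proof -
  have "(\<exists>m\<in>{n..L+1}. e \<le> \<bar>V k m \<omega> - V k n \<omega>\<bar>) \<longleftrightarrow>
     (\<exists>m\<in>{n..L+1}. e \<le> \<bar>bb k (hist par mut L \<omega>) m / aa k (hist par mut L \<omega>) m
        - bb k (hist par mut L \<omega>) n / aa k (hist par mut L \<omega>) n\<bar>)" for \<omega>
  proof (intro bex_cong refl)
    fix m assume "m \<in> {n..L+1}"
    then have m: "m \<le> L + 1" by simp
    show "e \<le> \<bar>V k m \<omega> - V k n \<omega>\<bar> \<longleftrightarrow> e \<le> \<bar>bb k (hist par mut L \<omega>) m / aa k (hist par mut L \<omega>) m
        - bb k (hist par mut L \<omega>) n / aa k (hist par mut L \<omega>) n\<bar>"
      unfolding V_def Vfrac_hist[where par=par and mut=mut and \<omega>=\<omega> and k=k, OF m]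
        Vfrac_hist[where par=par and mut=mut and \<omega>=\<omega> and k=k, OF assms] ..
  qed
  then show ?thesis by auto
qed

lemma event_sets: "n \<le> L + 1 \<Longrightarrow> {\<omega> \<in> space M. \<exists>m\<in>{n..L+1}. e \<le> \<bar>V k m \<omega> - V k n \<omega>\<bar>} \<in> sets M"
  unfolding event_eq by (rule measurable_sets[OF hist_meas]) simp

lemma ville_prob:
  assumes "2 \<le> k" "k \<le> n" "n \<le> L + 1" "0 < e"
  shows "prob {\<omega> \<in> space M. \<exists>m\<in>{n..L+1}. e \<le> \<bar>V k m \<omega> - V k n \<omega>\<bar>}
     \<le> (1 / real k) * (real k / real n) powr ((1 - r) / 2) / e^2"
proof -
  let ?P = "\<lambda>h. \<exists>m\<in>{n..L+1}. e \<le> \<bar>bb k h m / aa k h m - bb k h n / aa k h n\<bar>"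
  let ?S = "{\<omega> \<in> space M. \<exists>m\<in>{n..L+1}. e \<le> \<bar>V k m \<omega> - V k n \<omega>\<bar>}"
  have S: "?S = hist par mut L -` {h. ?P h} \<inter> space M" by (rule event_eq[OF assms(3)])
  have "prob ?S = (\<integral>\<omega>. indicator ?S \<omega> \<partial>M)"
  proof -
    have "?S \<inter> space M = ?S" by auto
    then show ?thesis by simp
  qed
  also have "\<dots> = (\<integral>\<omega>. (if ?P (hist par mut L \<omega>) then 1 else 0) \<partial>M)"
  proof (rule Bochner_Integration.integral_cong[OF refl])
    fix \<omega> assume "\<omega> \<in> space M"
    then show "indicator ?S \<omega> = (if ?P (hist par mut L \<omega>) then 1 else (0::real))"
      unfolding S by (simp add: indicator_def)
  qed
  also have "\<dots> = Exh r L (\<lambda>h. if ?P h then 1 else 0)" by (rule integral_hist)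
  also have "\<dots> \<le> Exh r (n - 1) (\<lambda>h. 1 / aa k h n) / e^2"
    by (rule ville_event) (use assms r0 r1 in auto)
  also have "\<dots> \<le> ((1 / real k) * (\<Prod>m=k..<n. 1 - (1 - r) / (2 * real m))) / e^2"
    by (intro divide_right_mono Ex_inva) (use assms r0 r1 in auto)
  also have "\<dots> \<le> ((1 / real k) * (real k / real n) powr ((1 - r) / 2)) / e^2"
  proof (intro divide_right_mono mult_left_mono)
    have "(\<Prod>m=k..<n. 1 - (1 - r) / (2 * real m)) = (\<Prod>m=k..<n. 1 - ((1 - r) / 2) / real m)" by simp
    also have "\<dots> \<le> (real k / real n) powr ((1 - r) / 2)"
      by (rule prod_lower) (use assms r0 r1 in auto)
    finally show "(\<Prod>m=k..<n. 1 - (1 - r) / (2 * real m)) \<le> (real k / real n) powr ((1 - r) / 2)" .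
  qed auto
  finally show ?thesis by simp
qed

lemma tail_prob:
  assumes "2 \<le> k" "k \<le> n" "0 < e"
  shows "prob {\<omega> \<in> space M. \<exists>m\<ge>n. e \<le> \<bar>V k m \<omega> - V k n \<omega>\<bar>}
     \<le> (1 / real k) * (real k / real n) powr ((1 - r) / 2) / e^2"
proof -
  define A where "A i = {\<omega> \<in> space M. \<exists>m\<in>{n..(n + i - 1) + 1}. e \<le> \<bar>V k m \<omega> - V k n \<omega>\<bar>}" for i
  have nn: "n + i - 1 + 1 = n + i" for i using assms by auto
  have Asets: "A i \<in> sets M" for i unfolding A_def by (rule event_sets) (simp add: nn)
  have inc: "incseq A"
    unfolding incseq_def A_def nn by force
  have U: "(\<Union>i. A i) = {\<omega> \<in> space M. \<exists>m\<ge>n. e \<le> \<bar>V k m \<omega> - V k n \<omega>\<bar>}"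
  proof (intro equalityI subsetI)
    fix \<omega> assume "\<omega> \<in> {\<omega> \<in> space M. \<exists>m\<ge>n. e \<le> \<bar>V k m \<omega> - V k n \<omega>\<bar>}"
    then obtain m where "\<omega> \<in> space M" "m \<ge> n" "e \<le> \<bar>V k m \<omega> - V k n \<omega>\<bar>" by auto
    then have "\<omega> \<in> A (m - n)" unfolding A_def nn by auto
    then show "\<omega> \<in> (\<Union>i. A i)" by auto
  qed (auto simp: A_def nn)
  have "(\<lambda>i. prob (A i)) \<longlonglongrightarrow> prob (\<Union>i. A i)"
    by (rule finite_Lim_measure_incseq) (use Asets inc in auto)
  then have "prob (\<Union>i. A i) \<le> (1 / real k) * (real k / real n) powr ((1 - r) / 2) / e^2"
  proof (rule LIMSEQ_le_const2, intro exI allI impI)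
    fix i
    show "prob (A i) \<le> (1 / real k) * (real k / real n) powr ((1 - r) / 2) / e^2"
      unfolding A_def by (rule ville_prob) (use assms in auto)
  qed
  then show ?thesis unfolding U .
qed

end


context yule
begin

lemma tail_sets: "{\<omega> \<in> space M. \<exists>m\<ge>n. e \<le> \<bar>V k m \<omega> - V k n \<omega>\<bar>} \<in> sets M"
  by measurable

lemma AE_conv:
  assumes "2 \<le> k"
  shows "AE \<omega> in M. convergent (\<lambda>m. V k m \<omega>)"
proof -
  define c where "c = (1 - r) / 2"
  have c0: "0 < c" using r1 by (simp add: c_def)
  define F where "F j = {\<omega> \<in> space M. \<forall>n\<ge>k. \<exists>m\<ge>n. 1 / real (Suc j) \<le> \<bar>V k m \<omega> - V k n \<omega>\<bar>}" for j
  have Fsets: "F j \<in> sets M" for j unfolding F_def by measurable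
  have Fnull: "prob (F j) = 0" for j
  proof -
    let ?e = "1 / real (Suc j)"
    have e0: "0 < ?e" by simp
    have bnd: "prob (F j) \<le> (1 / real k) * (real k / real n) powr c / ?e^2" if n: "k \<le> n" for n
    proof -
      have "F j \<subseteq> {\<omega> \<in> space M. \<exists>m\<ge>n. ?e \<le> \<bar>V k m \<omega> - V k n \<omega>\<bar>}"
        unfolding F_def using n by auto
      then have "prob (F j) \<le> prob {\<omega> \<in> space M. \<exists>m\<ge>n. ?e \<le> \<bar>V k m \<omega> - V k n \<omega>\<bar>}"
        by (intro finite_measure_mono tail_sets)
      also have "\<dots> \<le> (1 / real k) * (real k / real n) powr c / ?e^2"
        unfolding c_def by (rule tail_prob) (use assms n in auto)
      finally show ?thesis .
    qed
    have lim: "(\<lambda>n. (1 / real k) * (real k / real n) powr c / ?e^2) \<longlonglongrightarrow> (1 / real k) * 0 / ?e^2"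
      by (intro tendsto_intros powr_tend c0) simp
    have lim': "(\<lambda>n. (1 / real k) * (real k / real n) powr c / ?e^2) \<longlonglongrightarrow> 0"
      using lim by simp
    have "prob (F j) \<le> 0"
      using lim' by (rule LIMSEQ_le_const) (use bnd in auto)
    then show ?thesis using measure_nonneg[of M "F j"] by linarith
  qed
  have nF1: "AE \<omega> in M. \<omega> \<notin> F j" for j
  proof (rule AE_I'[where N="F j"])
    show "F j \<in> null_sets M" using Fsets Fnull by (simp add: null_sets_def emeasure_eq_measure)
  qed auto
  have "AE \<omega> in M. \<forall>j. \<omega> \<notin> F j" by (subst AE_all_countable) (use nF1 in blast)
  then show ?thesis using AE_space
  proof eventually_elim
    case (elim \<omega>)
    then have \<omega>: "\<omega> \<in> space M" and nF: "\<forall>j. \<omega> \<notin> F j" by auto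
    show "convergent (\<lambda>m. V k m \<omega>)"
    proof (rule Cauchy_convergent, rule CauchyI)
      fix e :: real assume e: "0 < e"
      obtain j where j: "inverse (real (Suc j)) < e / 2" using reals_Archimedean[of "e / 2"] e by auto
      have "\<not> (\<forall>n\<ge>k. \<exists>m\<ge>n. 1 / real (Suc j) \<le> \<bar>V k m \<omega> - V k n \<omega>\<bar>)"
        using nF \<omega> unfolding F_def by blast
      then obtain n0 where n0a: "k \<le> n0" and n0b: "\<forall>m\<ge>n0. \<not> 1 / real (Suc j) \<le> \<bar>V k m \<omega> - V k n0 \<omega>\<bar>"
        by blast
      have n0: "k \<le> n0" "\<forall>m\<ge>n0. \<bar>V k m \<omega> - V k n0 \<omega>\<bar> < 1 / real (Suc j)"
        using n0a n0b not_le by blast+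
      show "\<exists>M0. \<forall>m\<ge>M0. \<forall>n\<ge>M0. norm (V k m \<omega> - V k n \<omega>) < e"
      proof (intro exI allI impI)
        fix m n assume "n0 \<le> m" "n0 \<le> n"
        then have "\<bar>V k m \<omega> - V k n0 \<omega>\<bar> < 1 / real (Suc j)" "\<bar>V k n \<omega> - V k n0 \<omega>\<bar> < 1 / real (Suc j)"
          using n0 by auto
        moreover have "1 / real (Suc j) < e / 2" using j by (simp add: inverse_eq_divide)
        ultimately show "norm (V k m \<omega> - V k n \<omega>) < e" by simp
      qed
    qed
  qed
qed

lemma main_bound:
  assumes "2 \<le> N" "2 \<le> k" "k \<le> N"
  shows "(\<integral>\<omega>. (Xfrac (\<lambda>n. par n \<omega>) (\<lambda>n. mut n \<omega>) k N)\<^sup>2 *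
              (Wlim (\<lambda>n. par n \<omega>) (\<lambda>n. mut n \<omega>) k
               - Vfrac (\<lambda>n. par n \<omega>) (\<lambda>n. mut n \<omega>) k N)\<^sup>2 \<partial>M)
         \<le> r * (1 / (real N)\<^sup>2 + 2 / (real N powr (1 + r) * real k powr (1 - r)))"
proof -
  let ?f = "\<lambda>\<omega>. (X k N \<omega>)^2 * (lim (\<lambda>m. V k m \<omega>) - V k N \<omega>)^2"
  let ?s = "\<lambda>i \<omega>. (X k N \<omega>)^2 * (V k i \<omega> - V k N \<omega>)^2"
  let ?B = "r * (2 * (real N / real k) powr (1 - r)) / (real N)^2"
  have lhs: "(\<lambda>\<omega>. (Xfrac (\<lambda>n. par n \<omega>) (\<lambda>n. mut n \<omega>) k N)\<^sup>2 *
              (Wlim (\<lambda>n. par n \<omega>) (\<lambda>n. mut n \<omega>) k - Vfrac (\<lambda>n. par n \<omega>) (\<lambda>n. mut n \<omega>) k N)\<^sup>2) = ?f"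
    by (simp add: X_def V_def Wlim_def)
  have fm: "?f \<in> borel_measurable M" by measurable
  have sm: "?s i \<in> borel_measurable M" for i by measurable
  have lim: "AE \<omega> in M. (\<lambda>i. ?s i \<omega>) \<longlonglongrightarrow> ?f \<omega>"
    using AE_conv[OF assms(2)]
  proof eventually_elim
    case (elim \<omega>)
    then have "(\<lambda>i. V k i \<omega>) \<longlonglongrightarrow> lim (\<lambda>m. V k m \<omega>)" by (simp add: convergent_LIMSEQ_iff)
    then show ?case by (intro tendsto_intros)
  qed
  have bnd: "AE \<omega> in M. norm (?s i \<omega>) \<le> 1" for i
  proof (rule AE_I2)
    fix \<omega>
    have x: "0 \<le> X k N \<omega>" "X k N \<omega> \<le> 1" using X_01 by auto
    have v: "0 \<le> V k i \<omega>" "V k i \<omega> \<le> 1" "0 \<le> V k N \<omega>" "V k N \<omega> \<le> 1" using V_01 assms by auto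
    have a: "(X k N \<omega>)^2 \<le> 1" using x by (simp add: power_le_one)
    have b: "(V k i \<omega> - V k N \<omega>)^2 \<le> 1" using v by (simp add: abs_square_le_1)
    have "norm (?s i \<omega>) = (X k N \<omega>)^2 * (V k i \<omega> - V k N \<omega>)^2" by simp
    also have "\<dots> \<le> 1" using a b by (intro mult_le_one) auto
    finally show "norm (?s i \<omega>) \<le> 1" .
  qed
  have "(\<lambda>i. integral\<^sup>L M (?s i)) \<longlonglongrightarrow> integral\<^sup>L M ?f"
    by (rule integral_dominated_convergence[OF fm sm _ lim bnd]) simp
  then have "integral\<^sup>L M ?f \<le> ?B"
  proof (rule LIMSEQ_le_const2, intro exI allI impI)
    fix i assume "N \<le> i"
    then show "integral\<^sup>L M (?s i) \<le> ?B" using fin_bound[OF assms(2,3)] by simp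
  qed
  also have "?B = r * (2 / (real N powr (1 + r) * real k powr (1 - r)))"
  proof -
  have N0: "0 < real N" "0 < real k" using assms by auto
  have e2: "(real N)^2 = real N powr (1 + r) * real N powr (1 - r)"
  proof -
    have "real N powr (1 + r) * real N powr (1 - r) = real N powr ((1 + r) + (1 - r))"
      by (rule powr_add[symmetric])
    also have "(1 + r) + (1 - r) = real 2" by simp
    also have "real N powr real 2 = (real N)^2" by (rule powr_realpow[OF N0(1)])
    finally show ?thesis by simp
  qed
  have e1: "(real N / real k) powr (1 - r) = real N powr (1 - r) / real k powr (1 - r)"
    using N0 by (simp add: powr_divide)
  have p: "0 < real N powr (1 - r)" "0 < real k powr (1 - r)" "0 < real N powr (1 + r)"
    using N0 by auto
  define a where "a = real N powr (1 - r)"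
  define b where "b = real k powr (1 - r)"
  define c where "c = real N powr (1 + r)"
  have "a > 0" "b > 0" "c > 0" using p by (auto simp: a_def b_def c_def)
  then have "r * (2 * (a / b)) / (c * a) = r * (2 / (c * b))" by (simp add: field_simps)
  then show ?thesis unfolding e1 e2 a_def b_def c_def .
qed
  also have "\<dots> \<le> r * (1 / (real N)\<^sup>2 + 2 / (real N powr (1 + r) * real k powr (1 - r)))"
    using r0 by (intro mult_left_mono) auto
  finally show ?thesis unfolding lhs .
qed

end


theorem lemma3p3:
  fixes M :: "'a measure" and r :: real
    and par :: "nat \<Rightarrow> 'a \<Rightarrow> nat" and mut :: "nat \<Rightarrow> 'a \<Rightarrow> bool"
    and N k :: nat
  assumes "prob_space M"
    and "0 < r" and "r < 1"
    and indep: "prob_space.indep_vars M (\<lambda>_. count_space UNIV)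
                  (\<lambda>n \<omega>. (par n \<omega>, mut n \<omega>)) {2..}"
    and distr: "\<And>n. n \<ge> 2 \<Longrightarrow>
                  distr M (count_space UNIV) (\<lambda>\<omega>. (par n \<omega>, mut n \<omega>)) =
                  measure_pmf (pair_pmf (pmf_of_set {1..n-1}) (bernoulli_pmf r))"
    and "2 \<le> N" and "2 \<le> k" and "k \<le> N"
  shows "(\<integral>\<omega>. (Xfrac (\<lambda>n. par n \<omega>) (\<lambda>n. mut n \<omega>) k N)\<^sup>2 *
              (Wlim (\<lambda>n. par n \<omega>) (\<lambda>n. mut n \<omega>) k
               - Vfrac (\<lambda>n. par n \<omega>) (\<lambda>n. mut n \<omega>) k N)\<^sup>2 \<partial>M)
         \<le> r * (1 / (real N)\<^sup>2 + 2 / (real N powr (1 + r) * real k powr (1 - r)))"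
  proof -
  have y: "yule M r par mut"
  proof (rule yule.intro)
    show "prob_space M" by fact
    show "yule_axioms M r par mut"
      by (rule yule_axioms.intro) (use assms in auto)
  qed
  show ?thesis by (rule yule.main_bound[OF y]) (use assms in auto)
qed

end
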